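(* Consider scheduling on unrelated machines with all jobs available at time $0$, fix $\delta>0$ and $\beta\in(0,1)$, and assume every processing requirement $p_j$ is an integer power of $1+\delta$ and all predictions are underestimates ($\hat p_j\le p_j$). Then the total number of preemptions (including migrations) performed by SNAP with parameters $\beta,\delta$ is at most $$O\Big(\frac{1}{\beta\delta}\sum_j\Big(\log_2\frac{p_j}{\hat p_j}+1\Big)\Big).$$
   Context: Unrelated machines: a set $M$ of machines and $n$ jobs, all available at time $0$. Job $j$ is processed at rate $\lambda_{ij}\ge0$ on machine $i$ (known in advance); each machine processes at most one job at a time and each job runs on at most one machine at a time. Job $j$ has unknown processing requirement $p_j$ (learned at completion) and known prediction $\hat p_j$; it completes once its cumulative processed amount $q_j(t)$ reaches $p_j$. A preemption is an interruption of a job before completion; a migration is resuming a job on a different machine. SNAP with parameters $\beta\in(0,1)$, $\delta>0$ proceeds in epochs $k=1,2,\dots$; epoch $k$ starts at $e_k$ ($e_1=0$). Let $J_k$ be the set of unfinished jobs at $e_k$ and $n_k=|J_k|$. At $e_k$: (1) compute $y^{(k)}$ as an optimal solution of the convex program: maximize $\sum_{j\in J_k}\log y_j$ subject to $\sum_{j\in J_k}x_{ij}\le1$ for all $i\in M$, $\sum_{i\in M}x_{ij}\le1$ and $y_j=\sum_{i\in M}\lambda_{ij}x_{ij}$ for all $j\in J_k$, $x_{ij}\ge0$ (proportional fairness rates). (2) For each $j\in J_k$ let $u_{j,k}=(1+\delta)^{h+1}-q_j(e_k)$, where $h$ is the integer with $(1+\delta)^h\le\max\{\hat p_j,q_j(e_k)\}<(1+\delta)^{h+1}$.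 (3) Sort $J_k$ in non-decreasing order of $u_{j,k}/y^{(k)}_j$; if $j^*$ is the $\lceil\beta n_k\rceil$-th job, set $l_k=u_{j^*,k}/y^{(k)}_{j^*}$ and $v_{j,k}=\min\{u_{j,k},l_ky^{(k)}_j\}$ for $j\in J_k$. (4) Construct and execute a non-preemptive, non-migratory schedule starting at $e_k$ in which each $j\in J_k$ is processed on a single machine in a single contiguous interval and receives exactly $v_{j,k}$ units of processing, finishing by time $e_k+4l_k$ (such a schedule exists and is computed by a known polynomial-time rounding of the fractional assignment $x$); epoch $k$ ends, and epoch $k+1$ begins, when this schedule ends.
   Formalization: For each D > 0 the O-bound holds with a constant depending only on D for all delta in (0,D], and the preemptions counted in epoch k are the jobs of $J_k$ still unfinished when epoch k ends. Apart from conventions, each condition added here is assumed in the paper as well or is needed for the statement above to hold. *)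

theory Defs
  imports Complex_Main "HOL-Library.Multiset"
begin

text \<open>Machines and jobs are natural numbers; M is the finite machine set, J the finite job set.
  lam i j is the rate of job j on machine i, p j the true requirement, ph j the prediction.\<close>

definition feasible_assignment :: "nat set \<Rightarrow> nat set \<Rightarrow> (nat \<Rightarrow> nat \<Rightarrow> real) \<Rightarrow> bool" where
  "feasible_assignment M Jk x \<longleftrightarrow>
     (\<forall>i\<in>M. \<forall>j\<in>Jk. 0 \<le> x i j) \<and>
     (\<forall>i\<in>M. (\<Sum>j\<in>Jk. x i j) \<le> 1) \<and>
     (\<forall>j\<in>Jk. (\<Sum>i\<in>M. x i j) \<le> 1)"

definition rate_of :: "nat set \<Rightarrow> (nat \<Rightarrow> nat \<Rightarrow> real) \<Rightarrow> (nat \<Rightarrow> nat \<Rightarrow> real) \<Rightarrow> nat \<Rightarrow> real" where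
  "rate_of M lam x j = (\<Sum>i\<in>M. lam i j * x i j)"

text \<open>y is an optimal solution (the y-part) of the proportional fairness convex program
  maximize sum of log y_j. Solutions with some y_j <= 0 have objective minus infinity.\<close>
definition PF_rates :: "nat set \<Rightarrow> nat set \<Rightarrow> (nat \<Rightarrow> nat \<Rightarrow> real) \<Rightarrow> (nat \<Rightarrow> real) \<Rightarrow> bool" where
  "PF_rates M Jk lam y \<longleftrightarrow>
     (\<exists>x. feasible_assignment M Jk x \<and> (\<forall>j\<in>Jk. y j = rate_of M lam x j)) \<and>
     (\<forall>j\<in>Jk. 0 < y j) \<and>
     (\<forall>x'. feasible_assignment M Jk x' \<and> (\<forall>j\<in>Jk. 0 < rate_of M lam x' j) \<longrightarrow>
           (\<Sum>j\<in>Jk. ln (rate_of M lam x' j)) \<le> (\<Sum>j\<in>Jk. ln (y j)))"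

definition unfinished :: "nat set \<Rightarrow> (nat \<Rightarrow> real) \<Rightarrow> (nat \<Rightarrow> real) \<Rightarrow> nat set" where
  "unfinished J p q = {j\<in>J. q j < p j}"

definition u_val :: "real \<Rightarrow> (nat \<Rightarrow> real) \<Rightarrow> (nat \<Rightarrow> real) \<Rightarrow> nat \<Rightarrow> real" where
  "u_val \<delta> ph q j =
     (1 + \<delta>) powr (real_of_int (\<lfloor>log (1 + \<delta>) (max (ph j) (q j))\<rfloor> + 1)) - q j"

definition l_val :: "real \<Rightarrow> real \<Rightarrow> (nat \<Rightarrow> real) \<Rightarrow> nat set \<Rightarrow> (nat \<Rightarrow> real) \<Rightarrow> (nat \<Rightarrow> real) \<Rightarrow> real" where
  "l_val \<beta> \<delta> ph Jk q y =
     sorted_list_of_multiset (image_mset (\<lambda>j. u_val \<delta> ph q j / y j) (mset_set Jk))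
       ! (nat \<lceil>\<beta> * real (card Jk)\<rceil> - 1)"

definition v_val :: "real \<Rightarrow> real \<Rightarrow> (nat \<Rightarrow> real) \<Rightarrow> nat set \<Rightarrow> (nat \<Rightarrow> real) \<Rightarrow> (nat \<Rightarrow> real) \<Rightarrow> nat \<Rightarrow> real" where
  "v_val \<beta> \<delta> ph Jk q y j = min (u_val \<delta> ph q j) (l_val \<beta> \<delta> ph Jk q y * y j)"

text \<open>A run of SNAP: qs k = processed amounts q_j(e_k) at the start of epoch k (epochs indexed
  from 0 here), ys k = the proportional fairness rates y^(k). In epoch k every unfinished job j
  is processed in one contiguous interval on one machine for v_{j,k} units, or until it
  completes (its processed amount reaches p_j).\<close>
definition SNAP_run :: "nat set \<Rightarrow> nat set \<Rightarrow> (nat \<Rightarrow> nat \<Rightarrow> real) \<Rightarrow> (nat \<Rightarrow> real) \<Rightarrow> (nat \<Rightarrow> real)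
     \<Rightarrow> real \<Rightarrow> real \<Rightarrow> (nat \<Rightarrow> nat \<Rightarrow> real) \<Rightarrow> (nat \<Rightarrow> nat \<Rightarrow> real) \<Rightarrow> bool" where
  "SNAP_run M J lam p ph \<beta> \<delta> qs ys \<longleftrightarrow>
     qs 0 = (\<lambda>_. 0) \<and>
     (\<forall>k. let Jk = unfinished J p (qs k) in
            PF_rates M Jk lam (ys k) \<and>
            qs (Suc k) = (\<lambda>j. if j \<in> Jk
                               then min (p j) (qs k j + v_val \<beta> \<delta> ph Jk (qs k) (ys k) j)
                               else qs k j))"

text \<open>Preemptions in epoch k: since the schedule inside an epoch is non-preemptive and
  non-migratory, a job is interrupted before completion in epoch k exactly when it is
  unfinished at e_k and does not complete during epoch k (every job of J_k is processed
  in epoch k, as v_{j,k} > 0). Migrations are resumptions after such interruptions.\<close>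
definition preemptions_in_epoch :: "nat set \<Rightarrow> (nat \<Rightarrow> real) \<Rightarrow> (nat \<Rightarrow> real) \<Rightarrow> real \<Rightarrow> real
     \<Rightarrow> (nat \<Rightarrow> nat \<Rightarrow> real) \<Rightarrow> (nat \<Rightarrow> nat \<Rightarrow> real) \<Rightarrow> nat \<Rightarrow> nat" where
  "preemptions_in_epoch J p ph \<beta> \<delta> qs ys k =
     (let Jk = unfinished J p (qs k) in
      card {j\<in>Jk. qs k j + v_val \<beta> \<delta> ph Jk (qs k) (ys k) j < p j})"

end

theory Submission
  imports Defs
begin


lemma sorted_count:
  fixes xs :: "real list"
  assumes "sorted xs" "i < length xs"
  shows "Suc i \<le> length (filter (\<lambda>x. x \<le> xs ! i) xs)"
proof -
  let ?P = "\<lambda>x. x \<le> xs ! i"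
  have "\<forall>x\<in>set (take (Suc i) xs). ?P x"
  proof
    fix x assume "x \<in> set (take (Suc i) xs)"
    then obtain t where t: "t < length (take (Suc i) xs)" "x = take (Suc i) xs ! t"
      by (metis in_set_conv_nth)
    then have "t \<le> i" "t < length xs" by auto
    then show "?P x" using t assms by (simp add: sorted_nth_mono)
  qed
  then have "filter ?P (take (Suc i) xs) = take (Suc i) xs" by simp
  then have "length (filter ?P (take (Suc i) xs)) = Suc i" using assms(2) by simp
  moreover have "filter ?P xs = filter ?P (take (Suc i) xs) @ filter ?P (drop (Suc i) xs)"
    by (metis append_take_drop_id filter_append)
  ultimately show ?thesis by (simp add: mult.commute)
qed

lemma l_lemma:
  fixes f :: "nat \<Rightarrow> real"
  assumes A: "finite A" "A \<noteq> {}" and b: "0 < \<beta>" "\<beta> < 1"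
    and L: "L = sorted_list_of_multiset (image_mset f (mset_set A)) ! (nat \<lceil>\<beta> * real (card A)\<rceil> - 1)"
  shows "L \<in> f ` A \<and> \<beta> * real (card A) \<le> real (card {j\<in>A. f j \<le> L})"
proof -
  define xs where "xs = sorted_list_of_multiset (image_mset f (mset_set A))"
  define i where "i = nat \<lceil>\<beta> * real (card A)\<rceil> - 1"
  have n: "card A > 0" using A by auto
  have len: "length xs = card A" unfolding xs_def
    by (metis mset_sorted_list_of_multiset size_image_mset size_mset size_mset_set)
  have c1: "\<lceil>\<beta> * real (card A)\<rceil> \<ge> 1" using b n
    by (simp add: one_le_ceiling) 
  have "\<beta> * real (card A) \<le> real (card A)" using b n by simp
  then have c2: "\<lceil>\<beta> * real (card A)\<rceil> \<le> int (card A)"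
    by (simp add: ceiling_le_iff)
  have si: "Suc i = nat \<lceil>\<beta> * real (card A)\<rceil>" unfolding i_def using c1 by linarith
  have ilt: "i < length xs" using si c2 len by linarith
  have LL: "L = xs ! i" unfolding L xs_def i_def ..
  have "L \<in> set xs" using ilt LL by simp
  then have mem: "L \<in> f ` A" unfolding xs_def using A by simp
  have "card {j\<in>A. f j \<le> L} = size (filter_mset (\<lambda>j. f j \<le> L) (mset_set A))"
    using A by (simp add: filter_mset_mset_set)
  also have "\<dots> = size (filter_mset (\<lambda>x. x \<le> L) (image_mset f (mset_set A)))"
    by (simp add: filter_mset_image_mset)
  also have "\<dots> = size (filter_mset (\<lambda>x. x \<le> L) (mset xs))" unfolding xs_def by simp
  also have "\<dots> = length (filter (\<lambda>x. x \<le> L) xs)"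
    by (simp flip: mset_filter)
  finally have "Suc i \<le> card {j\<in>A. f j \<le> L}"
    using sorted_count[of xs i] ilt LL unfolding xs_def by simp
  moreover have "real (Suc i) = of_int \<lceil>\<beta> * real (card A)\<rceil>" using si c1 by simp
  moreover have "\<beta> * real (card A) \<le> of_int \<lceil>\<beta> * real (card A)\<rceil>" by (rule le_of_int_ceiling)
  ultimately show ?thesis using mem
    by (smt (verit) of_nat_le_iff)
qed

lemma term_bound:
  fixes x \<delta> D :: real
  assumes d: "0 < \<delta>" "\<delta> \<le> D" and x: "1 \<le> x"
  shows "log (1 + \<delta>) x + 2 \<le> (2 + 2 * D) / \<delta> * (log 2 x + 1)"
proof -
  define b where "b = 1 + \<delta>"
  have bpos: "b > 1" using d b_def by simp
  have "ln (1 / b) \<le> 1 / b - 1" using bpos by (intro ln_le_minus_one) simp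
  then have lnb: "ln b \<ge> 1 - 1 / b" using bpos by (simp add: ln_div)
  have "1 - 1 / b = \<delta> / b" using bpos b_def by (simp add: field_simps)
  with lnb have lnb2: "ln b \<ge> \<delta> / b" by simp
  have lnbpos: "ln b > 0" using bpos by simp
  have lnx: "ln x \<ge> 0" using x by simp
  have "log b x = ln x / ln b" by (simp add: log_def)
  also have "\<dots> \<le> ln x / (\<delta> / b)"
    using lnx lnb2 d bpos by (intro divide_left_mono) auto
  also have "\<dots> = ln x * b / \<delta>" by simp
  also have "\<dots> \<le> ln x * (1 + D) / \<delta>"
    using lnx d b_def by (intro divide_right_mono mult_left_mono) auto
  finally have A: "log b x \<le> ln x * (1 + D) / \<delta>" .
  have "ln x \<le> ln x / ln 2"
    using lnx ln_2_less_1 by (simp add: le_divide_eq mult_left_le)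
  then have B: "ln x \<le> log 2 x" by (simp add: log_def)
  have "ln x * (1 + D) / \<delta> \<le> log 2 x * (1 + D) / \<delta>"
    using B d by (intro divide_right_mono mult_right_mono) auto
  with A have C: "log b x \<le> (1 + D) / \<delta> * log 2 x" by (simp add: mult.commute)
  have l2: "log 2 x \<ge> 0" using x by simp
  have "2 \<le> (2 + 2 * D) / \<delta>" using d by (simp add: le_divide_eq)
  moreover have "(1 + D) / \<delta> * log 2 x \<le> (2 + 2 * D) / \<delta> * log 2 x"
    using d l2 by (intro mult_right_mono divide_right_mono) auto
  ultimately show ?thesis using C b_def by (simp add: distrib_left)
qed

lemma main_bound:
  fixes M J :: "nat set" and lam :: "nat \<Rightarrow> nat \<Rightarrow> real" and p ph :: "nat \<Rightarrow> real"
    and \<beta> \<delta> D :: real and qs ys :: "nat \<Rightarrow> nat \<Rightarrow> real" and N :: nat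
  assumes fin: "finite J" and be: "0 < \<beta>" "\<beta> < 1" and de: "0 < \<delta>" "\<delta> \<le> D"
    and php: "\<forall>j\<in>J. 0 < ph j \<and> ph j \<le> p j"
    and run: "SNAP_run M J lam p ph \<beta> \<delta> qs ys"
  shows "real (\<Sum>k<N. preemptions_in_epoch J p ph \<beta> \<delta> qs ys k)
         \<le> (2 + 2 * D) * (1 / (\<beta> * \<delta>)) * (\<Sum>j\<in>J. log 2 (p j / ph j) + 1)"
proof -
  define b where "b = 1 + \<delta>"
  have b1: "b > 1" using de b_def by simp
  define Jk where "Jk k = unfinished J p (qs k)" for k
  define Lv where "Lv k j = \<lfloor>log b (max (ph j) (qs k j))\<rfloor>" for k j
  define m where "m j = \<lfloor>log b (p j)\<rfloor>" for j
  define Phi where "Phi k j = (if j \<in> Jk k then real_of_int (m j - Lv k j + 1) else 0)" for k j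
  define l where "l k = l_val \<beta> \<delta> ph (Jk k) (qs k) (ys k)" for k
  define v where "v k j = v_val \<beta> \<delta> ph (Jk k) (qs k) (ys k) j" for k j
  define u where "u k j = u_val \<delta> ph (qs k) j" for k j
  define F where "F k = {j\<in>Jk k. u k j / ys k j \<le> l k}" for k
  have q0: "qs 0 = (\<lambda>_. 0)" using run unfolding SNAP_run_def by simp
  have PF: "PF_rates M (Jk k) lam (ys k)" for k
    using run unfolding SNAP_run_def Jk_def Let_def by simp
  have qS: "qs (Suc k) j = (if j \<in> Jk k then min (p j) (qs k j + v k j) else qs k j)" for k j
    using run unfolding SNAP_run_def Jk_def Let_def v_def by simp
  have ypos: "ys k j > 0" if "j \<in> Jk k" for k j
    using PF[of k] that unfolding PF_rates_def by auto
  have Jsub: "Jk k \<subseteq> J" for k unfolding Jk_def unfinished_def by auto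
  have Jfin: "finite (Jk k)" for k using Jsub fin by (meson finite_subset)
  have JkI: "j \<in> Jk k \<longleftrightarrow> j \<in> J \<and> qs k j < p j" for k j
    unfolding Jk_def unfinished_def by auto
  have u_eq: "u k j = b powr (real_of_int (Lv k j + 1)) - qs k j" for k j
    unfolding u_def u_val_def Lv_def b_def by simp
  have maxlt: "max (ph j) (qs k j) < b powr (real_of_int (Lv k j + 1))" if "j \<in> J" for k j
  proof -
    have xpos: "max (ph j) (qs k j) > 0" using php that by (simp add: less_max_iff_disj)
    have "log b (max (ph j) (qs k j)) < real_of_int (Lv k j + 1)"
      unfolding Lv_def by linarith
    then have "b powr log b (max (ph j) (qs k j)) < b powr (real_of_int (Lv k j + 1))"
      using b1 by simp
    then show ?thesis using xpos b1 by simp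
  qed
  have upos: "u k j > 0" if "j \<in> J" for k j
    using maxlt[OF that, of k] u_eq[of k j] by linarith
  have lfacts: "l k > 0 \<and> \<beta> * real (card (Jk k)) \<le> real (card (F k))" if "Jk k \<noteq> {}" for k
  proof -
    have L: "l k \<in> (\<lambda>j. u k j / ys k j) ` Jk k \<and>
        \<beta> * real (card (Jk k)) \<le> real (card {j\<in>Jk k. u k j / ys k j \<le> l k})"
      by (rule l_lemma[OF Jfin that be]) (simp add: l_def l_val_def u_def)
    then obtain j where j: "j \<in> Jk k" "l k = u k j / ys k j" by auto
    have "j \<in> J" using j Jsub by auto
    then have "l k > 0" using j upos[of j k] ypos[of j k] by simp
    then show ?thesis using L unfolding F_def by simp
  qed
  have v_eq: "v k j = min (u k j) (l k * ys k j)" for k j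
    unfolding v_def v_val_def u_def l_def ..
  have vnn: "v k j \<ge> 0" if "j \<in> Jk k" for k j
  proof -
    have "l k > 0" using lfacts[of k] that by auto
    moreover have "j \<in> J" using that Jsub by auto
    ultimately show ?thesis using v_eq[of k j] upos[of j k] ypos[OF that] by simp
  qed
  have vfull: "v k j = u k j" if "j \<in> F k" for k j
  proof -
    have jk: "j \<in> Jk k" and le: "u k j / ys k j \<le> l k" using that F_def by auto
    have "u k j \<le> l k * ys k j" using le ypos[OF jk] by (simp add: pos_divide_le_eq)
    then show ?thesis using v_eq[of k j] by simp
  qed
  have qle: "\<forall>j\<in>J. qs k j \<le> p j" for k
  proof (induction k)
    case 0 then show ?case using q0 php by force
  next
    case (Suc k) then show ?case using qS[of k] by auto
  qed
  have qmono: "qs k j \<le> qs (Suc k) j" if "j \<in> J" for k j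
    using qS[of k j] vnn[of j k] JkI[of j k] that by auto
  have notin: "j \<notin> Jk (Suc k)" if "j \<notin> Jk k" for k j
    using that qS[of k j] JkI by auto
  have Lvmono: "Lv k j \<le> Lv (Suc k) j" if "j \<in> J" for k j
  proof -
    have "max (ph j) (qs k j) > 0" using php that by (simp add: less_max_iff_disj)
    moreover have "max (ph j) (qs k j) \<le> max (ph j) (qs (Suc k) j)" using qmono[OF that, of k] by (simp add: le_max_iff_disj, linarith)
    ultimately show ?thesis unfolding Lv_def using b1 by (intro floor_mono) simp
  qed
  have Lvm: "Lv k j \<le> m j" if "j \<in> J" for k j
  proof -
    have "max (ph j) (qs k j) > 0" using php that by (simp add: less_max_iff_disj)
    moreover have mp: "max (ph j) (qs k j) \<le> p j" using qle[of k] php that by simp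
    ultimately have "p j > 0" by linarith
    then have "log b (max (ph j) (qs k j)) \<le> log b (p j)"
      using b1 mp \<open>max (ph j) (qs k j) > 0\<close> by (subst log_le_cancel_iff) auto
    then show ?thesis unfolding Lv_def m_def by (intro floor_mono)
  qed
  have perj: "Phi k j - Phi (Suc k) j \<ge> (if j \<in> F k then 1 else 0)" if jJ: "j \<in> J" for k j
  proof (cases "j \<in> Jk k")
    case False
    then have "j \<notin> F k" "j \<notin> Jk (Suc k)" using F_def notin by auto
    then show ?thesis using False Phi_def by simp
  next
    case jk: True
    show ?thesis
    proof (cases "j \<in> Jk (Suc k)")
      case False
      then show ?thesis using jk Phi_def Lvm[OF jJ, of k] by simp
    next
      case jk1: True
      have diff: "Phi k j - Phi (Suc k) j = real_of_int (Lv (Suc k) j - Lv k j)"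
        using jk jk1 Phi_def by simp
      show ?thesis
      proof (cases "j \<in> F k")
        case False
        then show ?thesis using diff Lvmono[OF jJ, of k] by simp
      next
        case True
        have "qs (Suc k) j < p j" using jk1 JkI by auto
        then have "qs (Suc k) j = qs k j + u k j" using qS[of k j] jk vfull[OF True] by auto
        then have qeq: "qs (Suc k) j = b powr (real_of_int (Lv k j + 1))" using u_eq by simp
        have pp: "b powr (real_of_int (Lv k j + 1)) > 0" using b1 by simp
        have "b powr (real_of_int (Lv k j + 1)) \<le> max (ph j) (qs (Suc k) j)" using qeq by simp
        moreover have "max (ph j) (qs (Suc k) j) > 0" using php jJ by (simp add: less_max_iff_disj)
        ultimately have "log b (b powr (real_of_int (Lv k j + 1))) \<le> log b (max (ph j) (qs (Suc k) j))"
          using pp b1 by (subst log_le_cancel_iff) auto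
        then have "real_of_int (Lv k j + 1) \<le> log b (max (ph j) (qs (Suc k) j))"
          using b1 by simp
        then have "Lv k j + 1 \<le> Lv (Suc k) j" unfolding Lv_def by (simp add: le_floor_iff)
        then show ?thesis using diff True by simp
      qed
    qed
  qed
  define S where "S k = (\<Sum>j\<in>J. Phi k j)" for k
  have sumstep: "real (card (F k)) \<le> S k - S (Suc k)" for k
  proof -
    have FJ: "F k \<subseteq> J" using Jsub F_def by auto
    have "real (card (F k)) = (\<Sum>j\<in>J. (if j \<in> F k then 1 else 0))"
      using FJ fin by (simp add: sum.If_cases Int_absorb1)
    also have "\<dots> \<le> (\<Sum>j\<in>J. Phi k j - Phi (Suc k) j)" by (intro sum_mono perj)
    also have "\<dots> = S k - S (Suc k)" unfolding S_def by (simp add: sum_subtractf)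
    finally show ?thesis .
  qed
  define P where "P k = preemptions_in_epoch J p ph \<beta> \<delta> qs ys k" for k
  have Pk: "\<beta> * real (P k) \<le> S k - S (Suc k)" for k
  proof (cases "Jk k = {}")
    case True
    then have "P k = 0" unfolding P_def preemptions_in_epoch_def Jk_def[symmetric] Let_def by simp
    then show ?thesis using sumstep[of k] by simp
  next
    case False
    have "P k \<le> card (Jk k)" unfolding P_def preemptions_in_epoch_def Jk_def[symmetric] Let_def
      using Jfin[of k] by (intro card_mono) auto
    then have "\<beta> * real (P k) \<le> \<beta> * real (card (Jk k))" using be by simp
    also have "\<dots> \<le> real (card (F k))" using lfacts[OF False] by simp
    finally show ?thesis using sumstep[of k] by simp
  qed
  have "\<beta> * real (\<Sum>k<N. P k) = (\<Sum>k<N. \<beta> * real (P k))" by (simp add: sum_distrib_left)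
  also have "\<dots> \<le> (\<Sum>k<N. S k - S (Suc k))" by (intro sum_mono Pk)
  also have "\<dots> = S 0 - S N" by (rule sum_lessThan_telescope')
  finally have T: "\<beta> * real (\<Sum>k<N. P k) \<le> S 0 - S N" .
  have SN: "S N \<ge> 0" unfolding S_def Phi_def using Lvm by (intro sum_nonneg) auto
  have S0: "S 0 \<le> (\<Sum>j\<in>J. log b (p j / ph j) + 2)" unfolding S_def
  proof (intro sum_mono)
    fix j assume jJ: "j \<in> J"
    have php': "0 < ph j" "ph j \<le> p j" using php jJ by auto
    have "j \<in> Jk 0" using JkI q0 php' jJ by simp
    then have "Phi 0 j = real_of_int (m j - \<lfloor>log b (ph j)\<rfloor> + 1)"
      unfolding Phi_def Lv_def using q0 php' by (simp add: max_def)
    also have "\<dots> \<le> log b (p j) - (log b (ph j) - 1) + 1" unfolding m_def by linarith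
    also have "\<dots> = log b (p j / ph j) + 2" using php' b1 by (simp add: log_divide)
    finally show "Phi 0 j \<le> log b (p j / ph j) + 2" .
  qed
  have TB: "(\<Sum>j\<in>J. log b (p j / ph j) + 2) \<le> (\<Sum>j\<in>J. (2 + 2 * D) / \<delta> * (log 2 (p j / ph j) + 1))"
  proof (intro sum_mono)
    fix j assume jJ: "j \<in> J"
    have "1 \<le> p j / ph j" using php jJ by simp
    then show "log b (p j / ph j) + 2 \<le> (2 + 2 * D) / \<delta> * (log 2 (p j / ph j) + 1)"
      unfolding b_def by (rule term_bound[OF de])
  qed
  have "\<beta> * real (\<Sum>k<N. P k) \<le> (2 + 2 * D) / \<delta> * (\<Sum>j\<in>J. log 2 (p j / ph j) + 1)"
    using T SN S0 TB by (simp add: sum_distrib_left)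
  then have "real (\<Sum>k<N. P k) \<le> ((2 + 2 * D) / \<delta> * (\<Sum>j\<in>J. log 2 (p j / ph j) + 1)) / \<beta>"
    unfolding pos_le_divide_eq[OF be(1)] by (metis mult.commute)
  moreover have "((2 + 2 * D) / \<delta> * (\<Sum>j\<in>J. log 2 (p j / ph j) + 1)) / \<beta>
      = (2 + 2 * D) * (1 / (\<beta> * \<delta>)) * (\<Sum>j\<in>J. log 2 (p j / ph j) + 1)"
    using be de by (simp add: field_simps)
  moreover have "(\<Sum>k<N. P k) = (\<Sum>k<N. preemptions_in_epoch J p ph \<beta> \<delta> qs ys k)"
    unfolding P_def ..
  ultimately show ?thesis by (simp add: mult.commute)
qed


theorem mainTheorem6:
  shows "\<forall>D>0. \<exists>C::real. \<forall>(M::nat set) (J::nat set) (lam::nat \<Rightarrow> nat \<Rightarrow> real)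
            (p::nat \<Rightarrow> real) (ph::nat \<Rightarrow> real) (\<beta>::real) (\<delta>::real)
            (qs::nat \<Rightarrow> nat \<Rightarrow> real) (ys::nat \<Rightarrow> nat \<Rightarrow> real) (N::nat).
     finite M \<and> M \<noteq> {} \<and> finite J \<and>
     (\<forall>i j. 0 \<le> lam i j) \<and> (\<forall>j\<in>J. \<exists>i\<in>M. 0 < lam i j) \<and>
     0 < \<beta> \<and> \<beta> < 1 \<and> 0 < \<delta> \<and> \<delta> \<le> D \<and>
     (\<forall>j\<in>J. \<exists>h::int. p j = (1 + \<delta>) powi h) \<and>
     (\<forall>j\<in>J. 0 < ph j \<and> ph j \<le> p j) \<and>
     SNAP_run M J lam p ph \<beta> \<delta> qs ys
     \<longrightarrow> real (\<Sum>k<N. preemptions_in_epoch J p ph \<beta> \<delta> qs ys k)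
         \<le> C * (1 / (\<beta> * \<delta>)) * (\<Sum>j\<in>J. log 2 (p j / ph j) + 1)"
  proof (intro allI impI)
  fix D :: real assume D: "D > 0"
  show "\<exists>C::real. \<forall>(M::nat set) (J::nat set) (lam::nat \<Rightarrow> nat \<Rightarrow> real)
            (p::nat \<Rightarrow> real) (ph::nat \<Rightarrow> real) (\<beta>::real) (\<delta>::real)
            (qs::nat \<Rightarrow> nat \<Rightarrow> real) (ys::nat \<Rightarrow> nat \<Rightarrow> real) (N::nat).
     finite M \<and> M \<noteq> {} \<and> finite J \<and>
     (\<forall>i j. 0 \<le> lam i j) \<and> (\<forall>j\<in>J. \<exists>i\<in>M. 0 < lam i j) \<and>
     0 < \<beta> \<and> \<beta> < 1 \<and> 0 < \<delta> \<and> \<delta> \<le> D \<and>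
     (\<forall>j\<in>J. \<exists>h::int. p j = (1 + \<delta>) powi h) \<and>
     (\<forall>j\<in>J. 0 < ph j \<and> ph j \<le> p j) \<and>
     SNAP_run M J lam p ph \<beta> \<delta> qs ys
     \<longrightarrow> real (\<Sum>k<N. preemptions_in_epoch J p ph \<beta> \<delta> qs ys k)
         \<le> C * (1 / (\<beta> * \<delta>)) * (\<Sum>j\<in>J. log 2 (p j / ph j) + 1)"
    by (rule exI[of _ "2 + 2 * D"]) (blast intro: main_bound)
qed

end
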